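(* A numerical semigroup $S$ has a cyclotomic exponent sequence with only finitely many nonzero terms if and only if $S$ is a cyclotomic numerical semigroup.
   Context: A numerical semigroup is a submonoid $S$ of $(\mathbb N,+)$ with $\mathbb N\setminus S$ finite; $\mathrm P_S(x)=(1-x)\sum_{s\in S}x^s$ is its semigroup polynomial (a polynomial with constant term $1$). There are unique integers $e_1,e_2,\ldots$ such that $\mathrm P_S(x)=\prod_{j=1}^\infty(1-x^j)^{e_j}$ as formal power series; the sequence $(e_1,e_2,\ldots)$ is the cyclotomic exponent sequence of $S$. $S$ is cyclotomic if $\mathrm P_S$ has all complex roots in the closed unit disc. *)

theory Defs
  imports "HOL-Analysis.Analysis" "HOL-Computational_Algebra.Polynomial_FPS"
begin

definition numerical_semigroup :: "nat set \<Rightarrow> bool" where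
  "numerical_semigroup S \<longleftrightarrow> 0 \<in> S \<and> (\<forall>a\<in>S. \<forall>b\<in>S. a + b \<in> S) \<and> finite (UNIV - S)"

definition semigroup_fps :: "nat set \<Rightarrow> complex fps" where
  "semigroup_fps S = (1 - fps_X) * Abs_fps (\<lambda>n. if n \<in> S then 1 else 0)"

definition semigroup_poly :: "nat set \<Rightarrow> complex poly" where
  "semigroup_poly S = (THE p. fps_of_poly p = semigroup_fps S)"

text \<open>e is the cyclotomic exponent sequence (indexed from 1; e 0 is irrelevant):
  P_S = prod_{j>=1} (1 - x^j)^(e j) as formal power series, i.e. coefficientwise,
  where the coefficient of x^n only depends on the factors with j <= n.\<close>
definition cyclotomic_exponent_seq :: "nat set \<Rightarrow> (nat \<Rightarrow> int) \<Rightarrow> bool" where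
  "cyclotomic_exponent_seq S e \<longleftrightarrow>
     (\<forall>n. fps_nth (semigroup_fps S) n =
          fps_nth (\<Prod>j\<in>{1..n}. (1 - fps_X ^ j) powi (e j)) n)"

definition cyclotomic_numerical_semigroup :: "nat set \<Rightarrow> bool" where
  "cyclotomic_numerical_semigroup S \<longleftrightarrow> numerical_semigroup S \<and>
     (\<forall>z::complex. poly (semigroup_poly S) z = 0 \<longrightarrow> cmod z \<le> 1)"

end

theory Submission imports Defs "HOL-Computational_Algebra.Fundamental_Theorem_Algebra" "HOL-Computational_Algebra.Primes" begin
unbundle no vec_syntax
notation fps_nth (infixl "$" 75)

definition LD :: "complex fps \<Rightarrow> complex fps" where
  "LD A = fps_X * fps_deriv A * inverse A"

lemma LD_unique:
  assumes "A $ 0 \<noteq> 0" "G * A = fps_X * fps_deriv A"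
  shows "LD A = G"
proof -
  have "LD A = G * A * inverse A" unfolding LD_def using assms(2) by simp
  also have "\<dots> = G * (A * inverse A)" by (simp add: mult.assoc)
  also have "A * inverse A = 1" using assms(1) by (rule inverse_mult_eq_1')
  finally show ?thesis by simp
qed

lemma LD_mul_self:
  assumes "A $ 0 \<noteq> 0"
  shows "LD A * A = fps_X * fps_deriv A"
proof -
  have "LD A * A = fps_X * fps_deriv A * (inverse A * A)" unfolding LD_def by (simp add: ac_simps)
  also have "inverse A * A = 1" using assms by (rule inverse_mult_eq_1)
  finally show ?thesis by simp
qed

lemma LD_mult:
  assumes "A $ 0 \<noteq> 0" "B $ 0 \<noteq> 0"
  shows "LD (A * B) = LD A + LD B"
proof (rule LD_unique)
  show "(A * B) $ 0 \<noteq> 0" using assms by simp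
  have "(LD A + LD B) * (A * B) = (LD A * A) * B + (LD B * B) * A" by (simp add: algebra_simps)
  also have "\<dots> = fps_X * fps_deriv (A * B)"
    using LD_mul_self[OF assms(1)] LD_mul_self[OF assms(2)] by (simp add: algebra_simps)
  finally show "(LD A + LD B) * (A * B) = fps_X * fps_deriv (A * B)" .
qed

lemma LD_const: "LD (fps_const c) = 0"
  by (simp add: LD_def)

lemma LD_one: "LD 1 = 0"
  by (simp add: LD_def)

lemma LD_inverse:
  assumes "A $ 0 \<noteq> 0"
  shows "LD (inverse A) = - LD A"
proof (rule LD_unique)
  show "inverse A $ 0 \<noteq> 0" using assms by simp
  have "- LD A * inverse A = - (fps_X * fps_deriv A * (inverse A)\<^sup>2)"
    unfolding LD_def by (simp add: power2_eq_square ac_simps)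
  also have "\<dots> = fps_X * fps_deriv (inverse A)"
    using fps_inverse_deriv[OF assms] by simp
  finally show "- LD A * inverse A = fps_X * fps_deriv (inverse A)" .
qed

lemma power_nth_0_ne: "(A::complex fps) $ 0 \<noteq> 0 \<Longrightarrow> (A ^ n) $ 0 \<noteq> 0"
  by (induction n) auto

lemma LD_power:
  assumes "A $ 0 \<noteq> 0"
  shows "LD (A ^ n) = of_nat n * LD A"
proof (induction n)
  case 0 then show ?case by (simp add: LD_one)
next
  case (Suc n)
  have "LD (A ^ Suc n) = LD (A * A ^ n)" by simp
  also have "\<dots> = LD A + LD (A ^ n)" using assms power_nth_0_ne[OF assms] by (rule LD_mult)
  finally show ?case using Suc by (simp add: algebra_simps)
qed

lemma powi_nth_0_ne: "(A::complex fps) $ 0 \<noteq> 0 \<Longrightarrow> (A powi k) $ 0 \<noteq> 0"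
  unfolding power_int_def by (auto intro!: power_nth_0_ne)

lemma LD_powi:
  assumes "A $ 0 \<noteq> 0"
  shows "LD (A powi k) = of_int k * LD A"
proof (cases "k \<ge> 0")
  case True
  then show ?thesis using LD_power[OF assms, of "nat k"] by (simp add: power_int_def)
next
  case False
  have "inverse A $ 0 \<noteq> 0" using assms by simp
  then have "LD (inverse A ^ nat (-k)) = of_nat (nat (-k)) * LD (inverse A)" by (rule LD_power)
  then show ?thesis using False LD_inverse[OF assms] by (simp add: power_int_def)
qed

lemma prod_nth_0: "finite J \<Longrightarrow> (\<Prod>j\<in>J. F j) $ 0 = (\<Prod>j\<in>J. (F j :: complex fps) $ 0)"
  by (induction J rule: finite_induct) auto

lemma LD_prod:
  assumes "finite J" "\<And>j. j \<in> J \<Longrightarrow> F j $ 0 \<noteq> 0"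
  shows "LD (\<Prod>j\<in>J. F j) = (\<Sum>j\<in>J. LD (F j))"
  using assms
proof (induction J rule: finite_induct)
  case empty then show ?case by (simp add: LD_one)
next
  case (insert x J)
  have "(\<Prod>j\<in>J. F j) $ 0 \<noteq> 0"
    using insert by (simp add: prod_nth_0)
  then show ?case using insert by (simp add: LD_mult)
qed

lemma X_deriv_nth: "(fps_X * fps_deriv A) $ n = of_nat n * (A::complex fps) $ n"
  by (cases n) (auto simp: algebra_simps)

lemma LD_root:
  assumes "a \<noteq> 0"
  shows "LD (fps_X + fps_const (-a)) = Abs_fps (\<lambda>n. if n = 0 then 0 else - ((inverse a) ^ n))"
  (is "_ = ?G")
proof (rule LD_unique)
  show "(fps_X + fps_const (- a)) $ 0 \<noteq> 0" using assms by simp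
  show "?G * (fps_X + fps_const (- a)) = fps_X * fps_deriv (fps_X + fps_const (- a))"
  proof (rule fps_ext)
    fix n
    have "(?G * (fps_X + fps_const (- a))) $ n = (fps_X * ?G) $ n - a * ?G $ n"
      by (simp add: algebra_simps)
    also have "\<dots> = (if n = 1 then 1 else 0)"
      using assms by (cases n) (auto simp: field_simps)
    also have "\<dots> = (fps_X * fps_deriv (fps_X + fps_const (- a))) $ n"
      by (subst X_deriv_nth) (auto simp: fps_X_def)
    finally show "(?G * (fps_X + fps_const (- a))) $ n = (fps_X * fps_deriv (fps_X + fps_const (- a))) $ n" .
  qed
qed

lemma LD_cyc:
  assumes "j \<ge> 1"
  shows "LD (1 - fps_X ^ j) = Abs_fps (\<lambda>n. if n > 0 \<and> j dvd n then - of_nat j else 0)"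
  (is "_ = ?G")
proof (rule LD_unique)
  show "(1 - fps_X ^ j :: complex fps) $ 0 \<noteq> 0" using assms by simp
  show "?G * (1 - fps_X ^ j) = fps_X * fps_deriv (1 - fps_X ^ j)"
  proof (rule fps_ext)
    fix n
    have "(?G * (1 - fps_X ^ j)) $ n = ?G $ n - (fps_X ^ j * ?G) $ n"
      by (simp add: algebra_simps)
    also have "\<dots> = ?G $ n - (if n < j then 0 else ?G $ (n - j))"
      by (simp only: fps_X_power_mult_nth)
    also have "\<dots> = (if n = j then - of_nat j else 0)"
    proof -
      consider "n < j" | "n = j" | "n > j" by linarith
      then show ?thesis
      proof cases
        case 1 then show ?thesis using assms by (auto dest: dvd_imp_le)
      next
        case 2 then show ?thesis using assms by auto
      next
        case 3
        have "j dvd n \<longleftrightarrow> j dvd (n - j)" using 3 by (simp add: dvd_diff_nat dvd_minus_self)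
        then show ?thesis using 3 by auto
      qed
    qed
    also have "\<dots> = (fps_X * fps_deriv (1 - fps_X ^ j)) $ n"
      by (simp add: X_deriv_nth fps_X_power_iff)
    finally show "(?G * (1 - fps_X ^ j)) $ n = (fps_X * fps_deriv (1 - fps_X ^ j)) $ n" .
  qed
qed

definition agree :: "nat \<Rightarrow> complex fps \<Rightarrow> complex fps \<Rightarrow> bool" where
  "agree N A B \<longleftrightarrow> (\<forall>k\<le>N. A $ k = B $ k)"

lemma agree_refl: "agree N A A" by (simp add: agree_def)

lemma agree_sym: "agree N A B \<Longrightarrow> agree N B A" by (simp add: agree_def)

lemma agree_trans: "agree N A B \<Longrightarrow> agree N B C \<Longrightarrow> agree N A C" by (simp add: agree_def)

lemma agree_mult:
  assumes "agree N A B" "agree N C D"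
  shows "agree N (A * C) (B * D)"
  unfolding agree_def
proof (intro allI impI)
  fix k assume k: "k \<le> N"
  show "(A * C) $ k = (B * D) $ k"
    unfolding fps_mult_nth
    by (rule sum.cong) (use assms k in \<open>auto simp: agree_def\<close>)
qed

lemma agree_inverse:
  assumes "agree N A B" "A $ 0 \<noteq> 0"
  shows "agree N (inverse A) (inverse B)"
proof -
  have B0: "B $ 0 \<noteq> 0" using assms by (auto simp: agree_def)
  have e1: "inverse A * B * inverse B = inverse A"
    using inverse_mult_eq_1'[OF B0] by (simp add: mult.assoc)
  have e2: "inverse A * A * inverse B = inverse B"
    using inverse_mult_eq_1[OF assms(2)] by simp
  have "agree N (inverse A * B * inverse B) (inverse A * A * inverse B)"
    by (intro agree_mult agree_refl agree_sym[OF assms(1)])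
  then show ?thesis unfolding e1 e2 .
qed

lemma agree_LD:
  assumes "agree N A B" "A $ 0 \<noteq> 0"
  shows "agree N (LD A) (LD B)"
proof -
  have "agree N (fps_X * fps_deriv A) (fps_X * fps_deriv B)"
    using assms(1) by (simp add: agree_def X_deriv_nth)
  then show ?thesis unfolding LD_def
    using agree_mult agree_inverse[OF assms] by blast
qed

lemma agree_one_power: "agree N A 1 \<Longrightarrow> agree N (A ^ n) 1"
proof (induction n)
  case 0 then show ?case by (simp add: agree_refl)
next
  case (Suc n) then show ?case using agree_mult[of N A 1 "A ^ n" 1] by simp
qed

lemma agree_one_powi:
  assumes "agree N A 1"
  shows "agree N (A powi k) 1"
proof -
  have "A $ 0 \<noteq> 0" using assms by (auto simp: agree_def)
  then have "agree N (inverse A) 1" using agree_inverse[OF assms] by simp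
  then show ?thesis using agree_one_power assms unfolding power_int_def by auto
qed

lemma agree_one_prod:
  "finite J \<Longrightarrow> (\<And>j. j \<in> J \<Longrightarrow> agree N (F j) 1) \<Longrightarrow> agree N (\<Prod>j\<in>J. F j) 1"
proof (induction J rule: finite_induct)
  case empty then show ?case by (simp add: agree_refl)
next
  case (insert x J) then show ?case using agree_mult[of N "F x" 1 "prod F J" 1] by simp
qed

lemma agree_cyc: "j > N \<Longrightarrow> agree N (1 - fps_X ^ j) 1"
  by (auto simp: agree_def fps_X_power_iff)

definition Qp :: "(nat \<Rightarrow> int) \<Rightarrow> nat \<Rightarrow> complex fps" where
  "Qp e n = (\<Prod>j\<in>{1..n}. (1 - fps_X ^ j) powi e j)"

lemma Q_trunc:
  assumes "k \<le> N"
  shows "agree k (Qp e N) (Qp e k)"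
proof -
  have split: "{1..N} = {1..k} \<union> {Suc k..N}" using assms by auto
  have "Qp e N = Qp e k * (\<Prod>j\<in>{Suc k..N}. (1 - fps_X ^ j) powi e j)"
    unfolding Qp_def split by (subst prod.union_disjoint) auto
  moreover have "agree k (\<Prod>j\<in>{Suc k..N}. (1 - fps_X ^ j) powi e j) 1"
    by (intro agree_one_prod agree_one_powi agree_cyc) auto
  ultimately show ?thesis using agree_mult[OF agree_refl[of k "Qp e k"]] by fastforce
qed

lemma agree_sfps:
  assumes "cyclotomic_exponent_seq S e"
  shows "agree N (semigroup_fps S) (Qp e N)"
  unfolding agree_def
proof (intro allI impI)
  fix k assume "k \<le> N"
  then have "Qp e N $ k = Qp e k $ k" using Q_trunc[of k N e] by (simp add: agree_def)
  then show "semigroup_fps S $ k = Qp e N $ k"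
    using assms by (simp add: cyclotomic_exponent_seq_def Qp_def)
qed

lemma cyc_nth0: "j \<ge> 1 \<Longrightarrow> ((1 - fps_X ^ j) powi k :: complex fps) $ 0 \<noteq> 0"
  by (rule powi_nth_0_ne) simp

lemma LD_Q_nth:
  assumes "n \<ge> 1"
  shows "LD (Qp e n) $ n = - of_int (\<Sum>j\<in>{j\<in>{1..n}. j dvd n}. int j * e j)"
proof -
  have "LD (Qp e n) = (\<Sum>j\<in>{1..n}. of_int (e j) * LD (1 - fps_X ^ j))"
    unfolding Qp_def by (subst LD_prod) (auto simp: cyc_nth0 LD_powi)
  then have "LD (Qp e n) $ n = (\<Sum>j\<in>{1..n}. of_int (e j) * (if j dvd n then - of_nat j else 0))"
    using assms by (simp add: fps_sum_nth LD_cyc)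
  also have "\<dots> = (\<Sum>j\<in>{j\<in>{1..n}. j dvd n}. - (of_int (e j) * of_nat j))"
    by (simp add: sum.inter_filter[symmetric] if_distrib cong: if_cong)
  finally show ?thesis by (simp add: sum_negf algebra_simps)
qed

lemma key_dvd:
  fixes n j p q :: nat
  assumes "prime p" "prime q" "p \<noteq> q" "p dvd n" "q dvd n" "j dvd n div p" "j dvd n div q"
  shows "j dvd (n div p) div q"
proof -
  have "coprime p q" using assms by (simp add: primes_coprime)
  then have "p * q dvd n" using assms by (simp add: divides_mult)
  then obtain r where n: "n = p * q * r" by blast
  have p0: "p > 0" "q > 0" using assms prime_gt_0_nat by auto
  have "n div p = q * r" "n div q = p * r" "(n div p) div q = r" using n p0 by auto
  then have "j dvd q * r" "j dvd p * r" using assms by auto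
  then have "j dvd gcd (r * q) (r * p)" by (simp add: mult.commute)
  also have "gcd (r * q) (r * p) = r * gcd q p" by (simp add: gcd_mult_distrib_nat)
  also have "gcd q p = 1" using \<open>coprime p q\<close> by (simp add: coprime_commute)
  finally show ?thesis using \<open>(n div p) div q = r\<close> by simp
qed

definition Aset :: "nat \<Rightarrow> nat set \<Rightarrow> nat set" where
  "Aset n Q = {j\<in>{1..n}. j dvd n \<and> (\<forall>q\<in>Q. \<not> j dvd n div q)}"

lemma Aset_step:
  assumes n: "n \<ge> 1" and p: "prime p" "p dvd n" "p \<notin> Q" and Q: "\<forall>q\<in>Q. prime q \<and> q dvd n"
  shows "Aset (n div p) Q \<subseteq> Aset n Q" "Aset n (insert p Q) = Aset n Q - Aset (n div p) Q"
proof -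
  define m where "m = n div p"
  have nm: "n = p * m" using p m_def by auto
  have m1: "m \<ge> 1" using n nm by (cases m) auto
  have qm: "q dvd m" if "q \<in> Q" for q
  proof -
    have "q \<noteq> p" using that p by auto
    then have "\<not> q dvd p" using Q that p by (meson primes_dvd_imp_eq)
    moreover have "q dvd p * m" using Q that nm by auto
    ultimately show ?thesis using Q that prime_dvd_mult_iff by blast
  qed
  have iff: "j \<in> Aset m Q \<longleftrightarrow> j \<in> Aset n Q \<and> j dvd m" for j
  proof
    assume j: "j \<in> Aset m Q"
    have "j dvd n" using j nm by (auto simp: Aset_def)
    moreover have "j \<le> n" using \<open>j dvd n\<close> n by (simp add: dvd_imp_le)
    moreover have "\<not> j dvd n div q" if q: "q \<in> Q" for q
    proof
      assume h: "j dvd n div q"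
      have "j dvd (n div p) div q"
        by (rule key_dvd) (use p Q q h j nm in \<open>auto simp: Aset_def\<close>)
      then show False using j q m_def by (auto simp: Aset_def)
    qed
    ultimately show "j \<in> Aset n Q \<and> j dvd m" using j by (auto simp: Aset_def)
  next
    assume j: "j \<in> Aset n Q \<and> j dvd m"
    have "j \<ge> 1" "j \<le> m" using j m1 by (auto simp: Aset_def dvd_imp_le)
    moreover have "\<not> j dvd m div q" if q: "q \<in> Q" for q
    proof
      assume h: "j dvd m div q"
      have "n div q = p * (m div q)" using qm[OF q] nm by auto
      then have "j dvd n div q" using h by simp
      then show False using j q by (auto simp: Aset_def)
    qed
    ultimately show "j \<in> Aset m Q" using j by (auto simp: Aset_def)
  qed
  show "Aset (n div p) Q \<subseteq> Aset n Q" using iff m_def by auto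
  show "Aset n (insert p Q) = Aset n Q - Aset (n div p) Q"
    using iff m_def by (auto simp: Aset_def)
qed

lemma T_bound:
  fixes e :: "nat \<Rightarrow> int" and D :: nat
  assumes hyp: "\<forall>n\<ge>1. \<bar>\<Sum>j\<in>{j\<in>{1..n}. j dvd n}. int j * e j\<bar> \<le> int D"
  shows "finite Q \<Longrightarrow> n \<ge> 1 \<Longrightarrow> (\<forall>q\<in>Q. prime q \<and> q dvd n) \<Longrightarrow>
         \<bar>\<Sum>j\<in>Aset n Q. int j * e j\<bar> \<le> 2 ^ card Q * int D"
proof (induction Q arbitrary: n rule: finite_induct)
  case empty
  have "Aset n {} = {j\<in>{1..n}. j dvd n}" by (auto simp: Aset_def)
  then show ?case using hyp empty by simp
next
  case (insert p Q)
  have p: "prime p" "p dvd n" and Q: "\<forall>q\<in>Q. prime q \<and> q dvd n" using insert by auto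
  have "p \<le> n" "0 < p" using p insert(4) by (auto simp: dvd_imp_le prime_gt_0_nat)
  then have "0 < n div p" by (simp add: div_greater_zero_iff)
  then have nd: "n div p \<ge> 1" by simp
  have Qd: "\<forall>q\<in>Q. prime q \<and> q dvd n div p"
  proof
    fix q assume q: "q \<in> Q"
    have "q \<noteq> p" using q insert by auto
    then have "\<not> q dvd p" using Q q p by (meson primes_dvd_imp_eq)
    moreover have "q dvd p * (n div p)" using Q q p by auto
    ultimately show "prime q \<and> q dvd n div p" using Q q prime_dvd_mult_iff by blast
  qed
  have st: "Aset (n div p) Q \<subseteq> Aset n Q" "Aset n (insert p Q) = Aset n Q - Aset (n div p) Q"
    using Aset_step[OF insert(4) p insert(2) Q] by auto
  have fin: "finite (Aset n Q)" by (simp add: Aset_def)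
  have "(\<Sum>j\<in>Aset n (insert p Q). int j * e j) =
        (\<Sum>j\<in>Aset n Q. int j * e j) - (\<Sum>j\<in>Aset (n div p) Q. int j * e j)"
    unfolding st(2) using fin st(1) by (rule sum_diff)
  moreover have "\<bar>\<Sum>j\<in>Aset n Q. int j * e j\<bar> \<le> 2 ^ card Q * int D"
    using insert.IH[OF insert(4) Q] .
  moreover have "\<bar>\<Sum>j\<in>Aset (n div p) Q. int j * e j\<bar> \<le> 2 ^ card Q * int D"
    using insert.IH[OF nd Qd] .
  ultimately have "\<bar>\<Sum>j\<in>Aset n (insert p Q). int j * e j\<bar> \<le> 2 * (2 ^ card Q * int D)"
    by linarith
  then show ?case using insert by simp
qed

lemma Aset_full:
  assumes "n \<ge> 1"
  shows "Aset n {p. prime p \<and> p dvd n} = {n}"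
proof -
  have "n \<in> Aset n {p. prime p \<and> p dvd n}"
  proof -
    have "\<not> n dvd n div q" if "prime q" "q dvd n" for q
    proof
      assume h: "n dvd n div q"
      have "n div q < n" using that assms by (intro div_less_dividend) (use prime_gt_1_nat[of q] in auto)
      moreover have "n div q > 0" using that assms
        by (metis dvd_div_eq_0_iff dvd_imp_le gr0I not_one_le_zero)
      ultimately show False using h dvd_imp_le by fastforce
    qed
    then show ?thesis using assms by (auto simp: Aset_def)
  qed
  moreover have "j = n" if j: "j \<in> Aset n {p. prime p \<and> p dvd n}" for j
  proof (rule ccontr)
    assume ne: "j \<noteq> n"
    from j obtain k where k: "n = j * k" by (auto simp: Aset_def)
    have "k \<noteq> 1" using k ne by auto
    then obtain q where q: "prime q" "q dvd k" using prime_factor_nat by blast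
    have "q dvd n" using q k by auto
    have "n div q = j * (k div q)" using q k by auto
    then have "j dvd n div q" by simp
    then show False using j q \<open>q dvd n\<close> by (auto simp: Aset_def)
  qed
  ultimately show ?thesis by blast
qed

lemma prod_primes_dvd:
  fixes n :: nat
  shows "finite D \<Longrightarrow> (\<forall>p\<in>D. prime p \<and> p dvd n) \<Longrightarrow> \<Prod>D dvd n"
proof (induction D rule: finite_induct)
  case empty then show ?case by simp
next
  case (insert x D)
  have x: "prime x" "x dvd n" using insert.prems by auto
  have IH: "\<Prod>D dvd n" using insert.IH insert.prems by blast
  have "\<not> x dvd \<Prod>D"
  proof
    assume "x dvd \<Prod>D"
    then obtain y where y: "y \<in> D" "x dvd y"
      using prime_dvd_prod_iff[OF insert.hyps(1) x(1), of "\<lambda>y. y"] by blast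
    have "prime y" using y(1) insert.prems by blast
    then have "x = y" using primes_dvd_imp_eq[OF x(1) _ y(2)] by blast
    then show False using insert.hyps(2) y(1) by blast
  qed
  then have "coprime x (\<Prod>D)" by (rule prime_imp_coprime[OF x(1)])
  then have "x * \<Prod>D dvd n" using divides_mult[OF x(2) IH] by blast
  then show ?case using insert.hyps by simp
qed

lemma card_pow_primes:
  fixes n :: nat
  assumes "n \<ge> 1"
  shows "2 ^ card {p. prime p \<and> p dvd n} \<le> card {d. d dvd n}"
proof -
  let ?P = "{p. prime p \<and> p dvd n}"
  have finD: "finite {d. d dvd n}"
    by (rule finite_subset[of _ "{..n}"]) (use assms in \<open>auto dest: dvd_imp_le\<close>)
  have finP: "finite ?P" by (rule finite_subset[OF _ finD]) blast
  have mem: "p \<in> D \<longleftrightarrow> p dvd \<Prod>D" if D: "D \<subseteq> ?P" and p: "prime p" for D p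
  proof
    have fD: "finite D" using finite_subset[OF D finP] .
    assume "p \<in> D" then show "p dvd \<Prod>D" using dvd_prodI[OF fD, of p "\<lambda>x. x"] by simp
  next
    have fD: "finite D" using finite_subset[OF D finP] .
    assume "p dvd \<Prod>D"
    then obtain y where y: "y \<in> D" "p dvd y"
      using prime_dvd_prod_iff[OF fD p, of "\<lambda>y. y"] by blast
    have "prime y" using y(1) D by blast
    then have "p = y" using primes_dvd_imp_eq[OF p _ y(2)] by blast
    then show "p \<in> D" using y(1) by simp
  qed
  have inj: "inj_on Prod (Pow ?P)"
  proof (rule inj_onI)
    fix D1 D2 assume D1: "D1 \<in> Pow ?P" and D2: "D2 \<in> Pow ?P" and eq: "\<Prod>D1 = \<Prod>D2"
    have "p \<in> D1 \<longleftrightarrow> p \<in> D2" for p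
    proof (cases "p \<in> ?P")
      case True
      then have "prime p" by blast
      then show ?thesis using mem[of D1 p] mem[of D2 p] D1 D2 eq by simp
    next
      case False then show ?thesis using D1 D2 by blast
    qed
    then show "D1 = D2" by blast
  qed
  have img: "Prod ` Pow ?P \<subseteq> {d. d dvd n}"
  proof
    fix d assume "d \<in> Prod ` Pow ?P"
    then obtain D where D: "D \<subseteq> ?P" "d = \<Prod>D" by blast
    have "\<Prod>D dvd n" by (rule prod_primes_dvd[OF finite_subset[OF D(1) finP]]) (use D in blast)
    then show "d \<in> {d. d dvd n}" using D by simp
  qed
  have "card (Pow ?P) \<le> card {d. d dvd n}" by (rule card_inj_on_le[OF inj img finD])
  then show ?thesis using finP by (simp add: card_Pow)
qed

lemma card_divisors:
  fixes n :: nat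
  assumes n: "n \<ge> 1"
  shows "real (card {d. d dvd n}) \<le> 2 * sqrt n"
proof -
  let ?L = "{d. d dvd n \<and> d * d \<le> n}" and ?U = "{d. d dvd n \<and> \<not> d * d \<le> n}"
  have finD: "finite {d. d dvd n}"
    by (rule finite_subset[of _ "{..n}"]) (use n in \<open>auto dest: dvd_imp_le\<close>)
  have finL: "finite ?L" by (rule finite_subset[OF _ finD]) blast
  have finU: "finite ?U" by (rule finite_subset[OF _ finD]) blast
  have split: "{d. d dvd n} = ?L \<union> ?U" by blast
  have c1: "card {d. d dvd n} = card ?L + card ?U"
    unfolding split by (rule card_Un_disjoint[OF finL finU]) blast
  have Usub: "?U \<subseteq> (\<lambda>d. n div d) ` ?L"
  proof
    fix d assume d: "d \<in> ?U"
    then obtain k where k: "n = d * k" by blast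
    have "d \<noteq> 0" using k n by (intro notI) simp
    then have d0: "d > 0" by simp
    have "k < d"
    proof (rule ccontr)
      assume "\<not> k < d"
      then have "d * d \<le> d * k" by simp
      then show False using d k by simp
    qed
    then have "k * k \<le> k * d" by simp
    then have "k * k \<le> n" using k by (simp add: mult.commute)
    moreover have "k dvd n" using k by simp
    moreover have "k \<noteq> 0" using k n by (intro notI) simp
    then have "d = n div k" using k by simp
    ultimately show "d \<in> (\<lambda>d. n div d) ` ?L" by blast
  qed
  have c2: "card ?U \<le> card ?L"
    by (rule order_trans[OF card_mono[OF finite_imageI[OF finL] Usub] card_image_le[OF finL]])
  have c3: "real (card ?L) \<le> sqrt n"
  proof -
    have "1 \<in> ?L" using n by simp
    then have ne: "?L \<noteq> {}" by blast
    define m where "m = Max ?L"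
    have mL: "m \<in> ?L" unfolding m_def using finL ne by (rule Max_in)
    have "?L \<subseteq> {1..m}"
    proof
      fix d assume dL: "d \<in> ?L"
      have "d \<le> m" unfolding m_def using finL dL by (rule Max_ge)
      moreover have "d \<noteq> 0" using dL n by (intro notI) simp
      ultimately show "d \<in> {1..m}" by simp
    qed
    then have "card ?L \<le> card {1..m}" by (rule card_mono[rotated]) simp
    then have cL: "card ?L \<le> m" by simp
    have "m * m \<le> n" using mL by blast
    then have "card ?L * card ?L \<le> n" using mult_le_mono[OF cL cL] by linarith
    then have "real (card ?L * card ?L) \<le> real n" by (simp only: of_nat_le_iff)
    then have "(real (card ?L))\<^sup>2 \<le> real n" by (simp add: power2_eq_square)
    then show ?thesis by (rule real_le_rsqrt)
  qed
  show ?thesis using c1 c2 c3 by linarith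
qed

lemma finite_support:
  fixes e :: "nat \<Rightarrow> int" and D :: nat
  assumes hyp: "\<forall>n\<ge>1. \<bar>\<Sum>j\<in>{j\<in>{1..n}. j dvd n}. int j * e j\<bar> \<le> int D"
  shows "finite {j. j \<ge> 1 \<and> e j \<noteq> 0}"
proof (rule finite_subset[of _ "{..4 * D * D}"])
  show "{j. j \<ge> 1 \<and> e j \<noteq> 0} \<subseteq> {..4 * D * D}"
  proof
    fix n assume "n \<in> {j. j \<ge> 1 \<and> e j \<noteq> 0}"
    then have n: "n \<ge> 1" and en: "e n \<noteq> 0" by auto
    let ?P = "{p. prime p \<and> p dvd n}"
    have finP: "finite ?P"
      by (rule finite_subset[of _ "{..n}"]) (use n in \<open>auto dest: dvd_imp_le\<close>)
    have "\<bar>\<Sum>j\<in>Aset n ?P. int j * e j\<bar> \<le> 2 ^ card ?P * int D"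
      by (rule T_bound[OF hyp finP n]) auto
    then have "\<bar>int n * e n\<bar> \<le> 2 ^ card ?P * int D" using Aset_full[OF n] by simp
    moreover have "int n \<le> \<bar>int n * e n\<bar>"
    proof -
      have "1 \<le> \<bar>e n\<bar>" using en by linarith
      then have "int n * 1 \<le> int n * \<bar>e n\<bar>" by (intro mult_left_mono) auto
      then show ?thesis by (simp add: abs_mult)
    qed
    ultimately have "int n \<le> 2 ^ card ?P * int D" by linarith
    then have "int n \<le> int (2 ^ card ?P * D)" by simp
    then have "n \<le> 2 ^ card ?P * D" by (simp only: of_nat_le_iff)
    then have "real n \<le> real (2 ^ card ?P * D)" by (simp only: of_nat_le_iff)
    then have "real n \<le> real (2 ^ card ?P) * real D" by (simp only: of_nat_mult)
    also have "\<dots> \<le> real (card {d. d dvd n}) * real D"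
      using card_pow_primes[OF n] by (intro mult_right_mono) auto
    also have "\<dots> \<le> 2 * sqrt n * real D"
      using card_divisors[OF n] by (intro mult_right_mono) auto
    finally have h: "real n \<le> 2 * sqrt n * real D" .
    have "sqrt n > 0" using n by simp
    have sq: "sqrt (real n) * sqrt (real n) = real n" by simp
    have "sqrt n * sqrt n \<le> sqrt n * (2 * real D)" using h by (subst sq) (simp add: ac_simps)
    then have "sqrt n \<le> 2 * real D" using \<open>sqrt n > 0\<close> by (rule mult_left_le_imp_le)
    then have "sqrt n * sqrt n \<le> (2 * real D) * (2 * real D)"
      using \<open>sqrt n > 0\<close> by (intro mult_mono) auto
    then have "real n \<le> real (4 * D * D)" by simp
    then have "n \<le> 4 * D * D" by (simp only: of_nat_le_iff)
    then show "n \<in> {..4 * D * D}" by simp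
  qed
qed (rule finite_atMost)

lemma sfps_nth:
  "semigroup_fps S $ n = (if n \<in> S then 1 else 0) - (if n > 0 \<and> n - 1 \<in> S then 1 else 0)"
  unfolding semigroup_fps_def by (simp add: algebra_simps)

lemma sfps_poly:
  assumes "numerical_semigroup S"
  shows "fps_of_poly (semigroup_poly S) = semigroup_fps S"
proof -
  have "finite (UNIV - S)" using assms by (simp add: numerical_semigroup_def)
  then obtain c where c: "\<forall>n\<in>UNIV - S. n \<le> c" using finite_nat_set_iff_bounded_le by blast
  have inS: "n \<in> S" if "n > c" for n using c that by force
  define p where "p = Poly (map (\<lambda>n. semigroup_fps S $ n) [0..<c+2])"
  have "fps_of_poly p = semigroup_fps S"
  proof (rule fps_ext)
    fix n
    show "fps_of_poly p $ n = semigroup_fps S $ n"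
    proof (cases "n < c + 2")
      case True then show ?thesis by (simp add: p_def nth_default_def del: upt_Suc)
    next
      case False
      then have "n \<in> S" "n - 1 \<in> S" using inS by auto
      then have "semigroup_fps S $ n = 0" using False by (simp add: sfps_nth)
      then show ?thesis using False by (simp add: p_def nth_default_def)
    qed
  qed
  have "semigroup_poly S = p"
    unfolding semigroup_poly_def
  proof (rule the_equality)
    show "fps_of_poly p = semigroup_fps S" by fact
  next
    fix q assume "fps_of_poly q = semigroup_fps S"
    then show "q = p" using \<open>fps_of_poly p = semigroup_fps S\<close> fps_of_poly_eq_iff by metis
  qed
  then show ?thesis using \<open>fps_of_poly p = semigroup_fps S\<close> by simp
qed

lemma prod_eq_1_each:
  fixes f :: "nat \<Rightarrow> real"
  assumes "finite A" "\<And>i. i \<in> A \<Longrightarrow> 0 \<le> f i \<and> f i \<le> 1" "prod f A = 1" "k \<in> A"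
  shows "f k = 1"
proof (rule ccontr)
  assume "f k \<noteq> 1"
  then have lt: "f k < 1" using assms by force
  have "prod f A = f k * prod f (A - {k})" using assms by (simp add: prod.remove)
  also have "prod f (A - {k}) \<le> 1" by (rule prod_le_1) (use assms in auto)
  then have "f k * prod f (A - {k}) \<le> f k"
    using assms(2)[OF assms(4)] by (simp add: mult_left_le)
  finally show False using lt assms by linarith
qed

lemma backward:
  assumes NS: "numerical_semigroup S" and CE: "cyclotomic_exponent_seq S e"
    and roots: "\<forall>z::complex. poly (semigroup_poly S) z = 0 \<longrightarrow> cmod z \<le> 1"
  shows "finite {j. j \<ge> 1 \<and> e j \<noteq> 0}"
proof -
  define P where "P = semigroup_poly S"
  have fP: "fps_of_poly P = semigroup_fps S" unfolding P_def using NS by (rule sfps_poly)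
  have cP: "coeff P n = semigroup_fps S $ n" for n using fP fps_of_poly_nth by metis
  have "0 \<in> S" using NS by (simp add: numerical_semigroup_def)
  then have P0: "coeff P 0 = 1" by (simp add: cP sfps_nth)
  then have "P \<noteq> 0" by auto
  then have "lead_coeff P \<noteq> 0" by simp
  then have lc: "cmod (lead_coeff P) = 1"
    using \<open>0 \<in> S\<close> unfolding cP sfps_nth by (auto split: if_splits)
  obtain r where dec: "smult (lead_coeff P) (\<Prod>i<degree P. [:-r i, 1:]) = P"
    using complex_poly_decompose' by blast
  have pr: "poly P z = lead_coeff P * (\<Prod>i<degree P. z - r i)" for z
    by (subst dec[symmetric]) (simp add: poly_prod)
  have rle: "cmod (r i) \<le> 1" if "i < degree P" for i
  proof -
    have "(\<Prod>j<degree P. r i - r j) = 0" using that by (intro prod_zero) auto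
    then have "poly P (r i) = 0" unfolding pr by simp
    then show ?thesis using roots by (simp add: P_def)
  qed
  have "poly P 0 = 1" using P0 by (simp add: poly_0_coeff_0)
  then have "cmod (lead_coeff P * (\<Prod>i<degree P. 0 - r i)) = 1" using pr by simp
  then have "(\<Prod>i<degree P. cmod (r i)) = 1"
    using lc by (simp add: norm_mult prod_norm[symmetric])
  then have r1: "cmod (r i) = 1" if "i < degree P" for i
    using prod_eq_1_each[of "{..<degree P}" "\<lambda>i. cmod (r i)" i] rle that by auto
  then have rnz: "r i \<noteq> 0" if "i < degree P" for i using that by force
  have fP2: "semigroup_fps S = fps_const (lead_coeff P) * (\<Prod>i<degree P. fps_X + fps_const (- r i))"
    by (subst fP[symmetric], subst dec[symmetric])
       (simp add: fps_of_poly_smult fps_of_poly_prod fps_of_poly_linear)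
  have LDP: "LD (semigroup_fps S) = (\<Sum>i<degree P. Abs_fps (\<lambda>n. if n = 0 then 0 else - ((inverse (r i)) ^ n)))"
  proof -
    have nz: "(fps_X + fps_const (- r i)) $ 0 \<noteq> 0" if "i < degree P" for i
      using rnz[OF that] by simp
    have "(\<Prod>i<degree P. fps_X + fps_const (- r i)) $ 0 \<noteq> 0"
      using nz by (simp add: prod_nth_0)
    then have "LD (semigroup_fps S) = LD (fps_const (lead_coeff P)) + LD (\<Prod>i<degree P. fps_X + fps_const (- r i))"
      unfolding fP2 using \<open>lead_coeff P \<noteq> 0\<close> by (intro LD_mult) auto
    also have "\<dots> = LD (\<Prod>i<degree P. fps_X + fps_const (- r i))"
      by (simp add: LD_const)
    also have "\<dots> = (\<Sum>i<degree P. LD (fps_X + fps_const (- r i)))"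
      by (rule LD_prod) (use nz in auto)
    also have "\<dots> = (\<Sum>i<degree P. Abs_fps (\<lambda>n. if n = 0 then 0 else - ((inverse (r i)) ^ n)))"
      using rnz by (intro sum.cong refl LD_root) auto
    finally show ?thesis .
  qed
  define t where "t n = (\<Sum>j\<in>{j\<in>{1..n}. j dvd n}. int j * e j)" for n
  have tb: "\<bar>t n\<bar> \<le> int (degree P)" if n: "n \<ge> 1" for n
  proof -
    have s0: "semigroup_fps S $ 0 \<noteq> 0" using fP P0 by (metis fps_of_poly_nth one_neq_zero)
    have "agree n (LD (semigroup_fps S)) (LD (Qp e n))"
      using agree_LD[OF agree_sfps[OF CE] s0] .
    then have "LD (semigroup_fps S) $ n = LD (Qp e n) $ n" by (simp add: agree_def)
    then have "(\<Sum>i<degree P. - ((inverse (r i)) ^ n)) = - of_int (t n)"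
      using n by (simp add: LDP LD_Q_nth t_def fps_sum_nth)
    then have eq: "of_int (t n) = (\<Sum>i<degree P. (inverse (r i)) ^ n)"
      by (simp add: sum_negf)
    have "cmod (of_int (t n)) \<le> (\<Sum>i<degree P. cmod ((inverse (r i)) ^ n))"
      unfolding eq by (rule norm_sum)
    also have "\<dots> = real (degree P)"
      using r1 by (simp add: norm_power norm_inverse)
    finally have "real_of_int \<bar>t n\<bar> \<le> real (degree P)" by simp
    then show ?thesis by linarith
  qed
  show ?thesis by (rule finite_support[of e "degree P"]) (use tb t_def in auto)
qed

lemma powi_cancel:
  assumes "(G::complex fps) $ 0 \<noteq> 0"
  shows "G powi k * G ^ nat (- k) = G ^ nat k"
proof (cases "k \<ge> 0")
  case True then show ?thesis by (simp add: power_int_def)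
next
  case False
  have "inverse G ^ nat (- k) * G ^ nat (- k) = (inverse G * G) ^ nat (- k)"
    by (simp add: power_mult_distrib)
  also have "inverse G * G = 1" using assms by (rule inverse_mult_eq_1)
  finally show ?thesis using False by (simp add: power_int_def)
qed

lemma forward:
  assumes NS: "numerical_semigroup S" and CE: "cyclotomic_exponent_seq S e"
    and fin: "finite {j. j \<ge> 1 \<and> e j \<noteq> 0}"
    and z: "poly (semigroup_poly S) z = 0"
  shows "cmod z \<le> 1"
proof -
  define P where "P = semigroup_poly S"
  have fP: "fps_of_poly P = semigroup_fps S" unfolding P_def using NS by (rule sfps_poly)
  obtain N where N: "\<forall>j\<in>{j. j \<ge> 1 \<and> e j \<noteq> 0}. j \<le> N"
    using fin finite_nat_set_iff_bounded_le by blast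
  have QN: "Qp e M = Qp e N" if "M \<ge> N" for M
  proof -
    have split: "{1..M} = {1..N} \<union> {Suc N..M}" using that by auto
    have "(\<Prod>j\<in>{Suc N..M}. (1 - fps_X ^ j) powi e j :: complex fps) = 1"
    proof (rule prod.neutral, intro ballI)
      fix j assume "j \<in> {Suc N..M}"
      then have j1: "j \<ge> 1" "\<not> j \<le> N" by auto
      have "e j = 0"
      proof (rule ccontr)
        assume "e j \<noteq> 0"
        then have "j \<in> {j. j \<ge> 1 \<and> e j \<noteq> 0}" using j1 by blast
        then show False using N j1 by blast
      qed
      then show "(1 - fps_X ^ j) powi e j = (1 :: complex fps)" by simp
    qed
    then show ?thesis unfolding Qp_def split by (subst prod.union_disjoint) auto
  qed
  have sQ: "semigroup_fps S = Qp e N"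
  proof (rule fps_ext)
    fix n
    have "agree (max n N) (semigroup_fps S) (Qp e (max n N))" by (rule agree_sfps[OF CE])
    then have "semigroup_fps S $ n = Qp e (max n N) $ n" by (simp add: agree_def)
    then show "semigroup_fps S $ n = Qp e N $ n" using QN[of "max n N"] by simp
  qed
  define Bp where "Bp = (\<Prod>j\<in>{1..N}. (1 - monom (1::complex) j) ^ nat (- e j))"
  define Ap where "Ap = (\<Prod>j\<in>{1..N}. (1 - monom (1::complex) j) ^ nat (e j))"
  have fB: "fps_of_poly Bp = (\<Prod>j\<in>{1..N}. (1 - fps_X ^ j) ^ nat (- e j))"
    by (simp add: Bp_def fps_of_poly_prod fps_of_poly_power fps_of_poly_diff fps_of_poly_monom')
  have fA: "fps_of_poly Ap = (\<Prod>j\<in>{1..N}. (1 - fps_X ^ j) ^ nat (e j))"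
    by (simp add: Ap_def fps_of_poly_prod fps_of_poly_power fps_of_poly_diff fps_of_poly_monom')
  have "fps_of_poly (P * Bp) = Qp e N * (\<Prod>j\<in>{1..N}. (1 - fps_X ^ j) ^ nat (- e j))"
    using fP sQ fB by (simp add: fps_of_poly_mult)
  also have "\<dots> = (\<Prod>j\<in>{1..N}. (1 - fps_X ^ j) powi e j * (1 - fps_X ^ j) ^ nat (- e j))"
    unfolding Qp_def by (simp add: prod.distrib)
  also have "\<dots> = (\<Prod>j\<in>{1..N}. (1 - fps_X ^ j) ^ nat (e j))"
    by (intro prod.cong refl powi_cancel) auto
  finally have "fps_of_poly (P * Bp) = fps_of_poly Ap" using fA by simp
  then have PA: "P * Bp = Ap" by (simp add: fps_of_poly_eq_iff)
  have "poly Ap z = 0" using z PA[symmetric] by (simp add: P_def)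
  then have "(\<Prod>j\<in>{1..N}. (1 - z ^ j) ^ nat (e j)) = 0"
    by (simp add: Ap_def poly_prod poly_monom)
  then obtain j where j: "j \<in> {1..N}" "(1 - z ^ j) ^ nat (e j) = 0"
    by (auto simp: prod_zero_iff)
  then have "z ^ j = 1" by simp
  then have "cmod z ^ j = 1" by (metis norm_one norm_power)
  show "cmod z \<le> 1"
  proof (rule ccontr)
    assume "\<not> cmod z \<le> 1"
    then have "1 < cmod z ^ j" using j by (intro one_less_power) auto
    then show False using \<open>cmod z ^ j = 1\<close> by simp
  qed
qed

theorem lemma9:
  fixes S :: "nat set" and e :: "nat \<Rightarrow> int"
  assumes "numerical_semigroup S"
    and "cyclotomic_exponent_seq S e"
  shows "finite {j. j \<ge> 1 \<and> e j \<noteq> 0} \<longleftrightarrow> cyclotomic_numerical_semigroup S"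
proof
  assume "finite {j. j \<ge> 1 \<and> e j \<noteq> 0}"
  then show "cyclotomic_numerical_semigroup S"
    unfolding cyclotomic_numerical_semigroup_def using assms forward by blast
next
  assume "cyclotomic_numerical_semigroup S"
  then show "finite {j. j \<ge> 1 \<and> e j \<noteq> 0}"
    unfolding cyclotomic_numerical_semigroup_def using assms backward by blast
qed

end
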